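(* For every odd $r\ge1$, the tuple $(p_{r,n}1_n)_{n\ge0}$, where $p_{r,n}=\sum_{i=1}^nx_i^r$ is the $r$th power sum, lies in the center $Z(\mathcal{NB}_t)$.
   Context: Let $\Bbbk$ be a field of characteristic $\neq2$, $t\in\{0,1\}$, and let $\mathcal{NB}_t$ be the nil-Brauer category: the strict graded $\Bbbk$-linear monoidal category (tensor $\star$, unit $\mathbb1$, composition $\circ$) generated by an object $B$ and morphisms $x:B\to B$ (degree 2), $\tau:B\star B\to B\star B$ (degree $-2$), $\cap:B\star B\to\mathbb1$, $\cup:\mathbb1\to B\star B$ (degree 0), with relations ($1=1_B$): $\tau\circ\tau=0$; $(\tau\star1)\circ(1\star\tau)\circ(\tau\star1)=(1\star\tau)\circ(\tau\star1)\circ(1\star\tau)$; $\cap\circ\cup=t1_{\mathbb1}$; $(\cap\star1)\circ(1\star\cup)=1=(1\star\cap)\circ(\cup\star1)$; $\cap\circ\tau=0$; $(1\star\cap)\circ(\tau\star1)=(\cap\star1)\circ(1\star\tau)$; $(x\star1)\circ\tau-\tau\circ(1\star x)=1\star1-\cup\circ\cap$; $\cap\circ(1\star x)=-\cap\circ(x\star1)$. For $g\in\Bbbk[x_1,\dots,x_n]$, $g1_n$ is the endomorphism of $B^{\star n}$ obtained by substituting $x_i\mapsto1^{\star(i-1)}\star x\star1^{\star(n-i)}$. The center $Z(\mathcal{NB}_t)$ consists of tuples $(z_n)_{n\ge0}$, $z_n\in\mathrm{End}(B^{\star n})$, with $z_m\circ f=f\circ z_n$ for all $f:B^{\star n}\to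 B^{\star m}$. *)

theory Defs
  imports Main
begin

text \<open>Formal morphism expressions of the nil-Brauer category. The object
  B^{\<star>n} is represented by the natural number n.\<close>

datatype 'k nbmor =
    Id nat
  | Zr nat nat
  | Xg | Taug | Capg | Cupg
  | Comp "'k nbmor" "'k nbmor"     \<comment> \<open>Comp f g = f \<circ> g\<close>
  | Tens "'k nbmor" "'k nbmor"
  | Add "'k nbmor" "'k nbmor"
  | Smul 'k "'k nbmor"

inductive hom :: "'k nbmor \<Rightarrow> nat \<Rightarrow> nat \<Rightarrow> bool" where
  hom_Id: "hom (Id n) n n"
| hom_Zr: "hom (Zr n m) n m"
| hom_X: "hom Xg 1 1"
| hom_Tau: "hom Taug 2 2"
| hom_Cap: "hom Capg 2 0"
| hom_Cup: "hom Cupg 0 2"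
| hom_Comp: "hom f n m \<Longrightarrow> hom g k n \<Longrightarrow> hom (Comp f g) k m"
| hom_Tens: "hom f n m \<Longrightarrow> hom g n' m' \<Longrightarrow> hom (Tens f g) (n + n') (m + m')"
| hom_Add: "hom f n m \<Longrightarrow> hom g n m \<Longrightarrow> hom (Add f g) n m"
| hom_Smul: "hom f n m \<Longrightarrow> hom (Smul c f) n m"

text \<open>Equality of morphisms in NB_t: the congruence generated by the axioms of a
  strict k-linear monoidal category together with the defining relations.\<close>
inductive eqv :: "'k::field \<Rightarrow> 'k nbmor \<Rightarrow> 'k nbmor \<Rightarrow> bool" for t :: 'k where
  refl: "hom f n m \<Longrightarrow> eqv t f f"
| sym: "eqv t f g \<Longrightarrow> eqv t g f"
| trans: "eqv t f g \<Longrightarrow> eqv t g h \<Longrightarrow> eqv t f h"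
| cong_Comp: "eqv t f f' \<Longrightarrow> eqv t g g' \<Longrightarrow> hom f n m \<Longrightarrow> hom g k n \<Longrightarrow>
     eqv t (Comp f g) (Comp f' g')"
| cong_Tens: "eqv t f f' \<Longrightarrow> eqv t g g' \<Longrightarrow> eqv t (Tens f g) (Tens f' g')"
| cong_Add: "eqv t f f' \<Longrightarrow> eqv t g g' \<Longrightarrow> hom f n m \<Longrightarrow> hom g n m \<Longrightarrow>
     eqv t (Add f g) (Add f' g')"
| cong_Smul: "eqv t f f' \<Longrightarrow> eqv t (Smul c f) (Smul c f')"
| comp_id_l: "hom f n m \<Longrightarrow> eqv t (Comp (Id m) f) f"
| comp_id_r: "hom f n m \<Longrightarrow> eqv t (Comp f (Id n)) f"
| comp_assoc: "hom f n m \<Longrightarrow> hom g k n \<Longrightarrow> hom h j k \<Longrightarrow>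
     eqv t (Comp (Comp f g) h) (Comp f (Comp g h))"
| tens_assoc: "hom f n m \<Longrightarrow> hom g n' m' \<Longrightarrow> hom h n'' m'' \<Longrightarrow>
     eqv t (Tens (Tens f g) h) (Tens f (Tens g h))"
| tens_unit_l: "hom f n m \<Longrightarrow> eqv t (Tens (Id 0) f) f"
| tens_unit_r: "hom f n m \<Longrightarrow> eqv t (Tens f (Id 0)) f"
| tens_id: "eqv t (Tens (Id m) (Id n)) (Id (m + n))"
| interchange: "hom f n m \<Longrightarrow> hom f' k n \<Longrightarrow> hom g n2 m2 \<Longrightarrow> hom g' k2 n2 \<Longrightarrow>
     eqv t (Comp (Tens f g) (Tens f' g')) (Tens (Comp f f') (Comp g g'))"
| add_assoc: "hom f n m \<Longrightarrow> hom g n m \<Longrightarrow> hom h n m \<Longrightarrow>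
     eqv t (Add (Add f g) h) (Add f (Add g h))"
| add_comm: "hom f n m \<Longrightarrow> hom g n m \<Longrightarrow> eqv t (Add f g) (Add g f)"
| add_zero: "hom f n m \<Longrightarrow> eqv t (Add f (Zr n m)) f"
| add_inv: "hom f n m \<Longrightarrow> eqv t (Add f (Smul (-1) f)) (Zr n m)"
| smul_one: "hom f n m \<Longrightarrow> eqv t (Smul 1 f) f"
| smul_smul: "hom f n m \<Longrightarrow> eqv t (Smul a (Smul b f)) (Smul (a * b) f)"
| smul_add_scalar: "hom f n m \<Longrightarrow> eqv t (Smul (a + b) f) (Add (Smul a f) (Smul b f))"
| smul_add: "hom f n m \<Longrightarrow> hom g n m \<Longrightarrow> eqv t (Smul a (Add f g)) (Add (Smul a f) (Smul a g))"
| comp_add_l: "hom f n m \<Longrightarrow> hom g n m \<Longrightarrow> hom h k n \<Longrightarrow>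
     eqv t (Comp (Add f g) h) (Add (Comp f h) (Comp g h))"
| comp_add_r: "hom f n m \<Longrightarrow> hom g k n \<Longrightarrow> hom h k n \<Longrightarrow>
     eqv t (Comp f (Add g h)) (Add (Comp f g) (Comp f h))"
| comp_smul_l: "hom f n m \<Longrightarrow> hom g k n \<Longrightarrow> eqv t (Comp (Smul c f) g) (Smul c (Comp f g))"
| comp_smul_r: "hom f n m \<Longrightarrow> hom g k n \<Longrightarrow> eqv t (Comp f (Smul c g)) (Smul c (Comp f g))"
| tens_add_l: "hom f n m \<Longrightarrow> hom g n m \<Longrightarrow> hom h n' m' \<Longrightarrow>
     eqv t (Tens (Add f g) h) (Add (Tens f h) (Tens g h))"
| tens_add_r: "hom f n m \<Longrightarrow> hom g n' m' \<Longrightarrow> hom h n' m' \<Longrightarrow>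
     eqv t (Tens f (Add g h)) (Add (Tens f g) (Tens f h))"
| tens_smul_l: "hom f n m \<Longrightarrow> hom g n' m' \<Longrightarrow> eqv t (Tens (Smul c f) g) (Smul c (Tens f g))"
| tens_smul_r: "hom f n m \<Longrightarrow> hom g n' m' \<Longrightarrow> eqv t (Tens f (Smul c g)) (Smul c (Tens f g))"
| rel_tau_sq: "eqv t (Comp Taug Taug) (Zr 2 2)"
| rel_braid: "eqv t (Comp (Tens Taug (Id 1)) (Comp (Tens (Id 1) Taug) (Tens Taug (Id 1))))
                    (Comp (Tens (Id 1) Taug) (Comp (Tens Taug (Id 1)) (Tens (Id 1) Taug)))"
| rel_bubble: "eqv t (Comp Capg Cupg) (Smul t (Id 0))"
| rel_zigzag1: "eqv t (Comp (Tens Capg (Id 1)) (Tens (Id 1) Cupg)) (Id 1)"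
| rel_zigzag2: "eqv t (Comp (Tens (Id 1) Capg) (Tens Cupg (Id 1))) (Id 1)"
| rel_cap_tau: "eqv t (Comp Capg Taug) (Zr 2 0)"
| rel_cap_tau_slide: "eqv t (Comp (Tens (Id 1) Capg) (Tens Taug (Id 1)))
                            (Comp (Tens Capg (Id 1)) (Tens (Id 1) Taug))"
| rel_dot_slide: "eqv t (Add (Comp (Tens Xg (Id 1)) Taug) (Smul (-1) (Comp Taug (Tens (Id 1) Xg))))
                        (Add (Tens (Id 1) (Id 1)) (Smul (-1) (Comp Cupg Capg)))"
| rel_cap_dot: "eqv t (Comp Capg (Tens (Id 1) Xg)) (Smul (-1) (Comp Capg (Tens Xg (Id 1))))"

definition xvar :: "nat \<Rightarrow> nat \<Rightarrow> 'k nbmor" where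
  "xvar n i = Tens (Id (i - 1)) (Tens Xg (Id (n - i)))"

fun cpow :: "nat \<Rightarrow> 'k nbmor \<Rightarrow> nat \<Rightarrow> 'k nbmor" where
  "cpow n f 0 = Id n"
| "cpow n f (Suc r) = Comp f (cpow n f r)"

fun psum_part :: "nat \<Rightarrow> nat \<Rightarrow> nat \<Rightarrow> 'k nbmor" where
  "psum_part r n 0 = Zr n n"
| "psum_part r n (Suc k) = Add (psum_part r n k) (cpow n (xvar n (Suc k)) r)"

definition psum :: "nat \<Rightarrow> nat \<Rightarrow> 'k nbmor" where
  "psum r n = psum_part r n n"

definition in_center :: "'k::field \<Rightarrow> (nat \<Rightarrow> 'k nbmor) \<Rightarrow> bool" where
  "in_center t z \<longleftrightarrow> (\<forall>n. hom (z n) n n) \<and>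
     (\<forall>f n m. hom f n m \<longrightarrow> eqv t (Comp (z m) f) (Comp f (z n)))"

end

theory Submission
  imports Defs
begin


fun wt :: "'k nbmor \<Rightarrow> bool" and src :: "'k nbmor \<Rightarrow> nat" and tgt :: "'k nbmor \<Rightarrow> nat" where
  "wt (Id n) = True" | "wt (Zr n m) = True" | "wt Xg = True" | "wt Taug = True"
| "wt Capg = True" | "wt Cupg = True"
| "wt (Comp f g) = (wt f \<and> wt g \<and> src f = tgt g)"
| "wt (Tens f g) = (wt f \<and> wt g)"
| "wt (Add f g) = (wt f \<and> wt g \<and> src f = src g \<and> tgt f = tgt g)"
| "wt (Smul c f) = wt f"
| "src (Id n) = n" | "src (Zr n m) = n" | "src Xg = 1" | "src Taug = 2"
| "src Capg = 2" | "src Cupg = 0"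
| "src (Comp f g) = src g" | "src (Tens f g) = src f + src g"
| "src (Add f g) = src f" | "src (Smul c f) = src f"
| "tgt (Id n) = n" | "tgt (Zr n m) = m" | "tgt Xg = 1" | "tgt Taug = 2"
| "tgt Capg = 0" | "tgt Cupg = 2"
| "tgt (Comp f g) = tgt f" | "tgt (Tens f g) = tgt f + tgt g"
| "tgt (Add f g) = tgt f" | "tgt (Smul c f) = tgt f"

lemma hom_imp: "hom f n m \<Longrightarrow> wt f \<and> src f = n \<and> tgt f = m"
  by (induction rule: hom.induct) auto

lemma hom_of: "wt f \<Longrightarrow> hom f (src f) (tgt f)"
proof (induction f)
  case Xg then show ?case using hom_X by simp
qed (auto intro: hom.intros)

lemma hom_iff: "hom f n m \<longleftrightarrow> wt f \<and> src f = n \<and> tgt f = m"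
  using hom_imp hom_of by blast

lemma eqv_wt: "eqv t f g \<Longrightarrow> wt f \<and> wt g \<and> src f = src g \<and> tgt f = tgt g"
  by (induction rule: eqv.induct) (auto simp: hom_iff)

definition R :: "'k::field nbmor \<Rightarrow> 'k nbmor \<Rightarrow> bool" where
  "R f g \<longleftrightarrow> (\<forall>t. eqv t f g) \<or> (\<not> wt f \<and> \<not> wt g)"

lemma R_equivp: "equivp R"
proof (rule equivpI)
  show "reflp R" unfolding reflp_def R_def
    using hom_of eqv.refl by blast
  show "symp R" unfolding symp_def R_def
    using eqv.sym by blast
  show "transp R" unfolding transp_def R_def
    using eqv.trans eqv_wt by metis
qed

quotient_type (overloaded) 'k mor = "'k::field nbmor" / R
  by (rule R_equivp)


lemma R_I: "(wt f \<Longrightarrow> (\<And>t. eqv t f g)) \<Longrightarrow> (wt f \<longleftrightarrow> wt g) \<Longrightarrow> R f g"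
  unfolding R_def by blast

lemma R_wt: "R f g \<Longrightarrow> wt f = wt g \<and> (wt f \<longrightarrow> src f = src g \<and> tgt f = tgt g)"
  unfolding R_def using eqv_wt by metis

lemma R_E: "R f g \<Longrightarrow> wt f \<Longrightarrow> eqv t f g"
  unfolding R_def by blast

lift_definition qId :: "nat \<Rightarrow> 'k::field mor" is Id .
lift_definition qZr :: "nat \<Rightarrow> nat \<Rightarrow> 'k::field mor" is Zr .
lift_definition qX :: "'k::field mor" is Xg .
lift_definition qT :: "'k::field mor" is Taug .
lift_definition qCap :: "'k::field mor" is Capg .
lift_definition qCup :: "'k::field mor" is Cupg .

lift_definition qwt :: "'k::field mor \<Rightarrow> bool" is wt
  using R_wt by blast
lift_definition qsrc :: "'k::field mor \<Rightarrow> nat" is "\<lambda>f. if wt f then src f else 0"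
  using R_wt by metis
lift_definition qtgt :: "'k::field mor \<Rightarrow> nat" is "\<lambda>f. if wt f then tgt f else 0"
  using R_wt by metis

instantiation mor :: (field) "{plus, times}"
begin
lift_definition plus_mor :: "'a mor \<Rightarrow> 'a mor \<Rightarrow> 'a mor" is Add
proof -
  fix f f' g g' :: "'a nbmor"
  assume a: "R f f'" "R g g'"
  show "R (Add f g) (Add f' g')"
  proof (rule R_I)
    fix t assume w: "wt (Add f g)"
    show "eqv t (Add f g) (Add f' g')"
      using w a by (intro eqv.cong_Add[OF R_E R_E]) (auto simp: hom_iff)
  next
    show "wt (Add f g) = wt (Add f' g')" using a[THEN R_wt] by auto
  qed
qed
lift_definition times_mor :: "'a mor \<Rightarrow> 'a mor \<Rightarrow> 'a mor" is Comp
proof -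
  fix f f' g g' :: "'a nbmor"
  assume a: "R f f'" "R g g'"
  show "R (Comp f g) (Comp f' g')"
  proof (rule R_I)
    fix t assume w: "wt (Comp f g)"
    show "eqv t (Comp f g) (Comp f' g')"
      using w a by (intro eqv.cong_Comp[OF R_E R_E]) (auto simp: hom_iff)
  next
    show "wt (Comp f g) = wt (Comp f' g')" using a[THEN R_wt] by auto
  qed
qed
instance ..

end

lift_definition tens :: "'k::field mor \<Rightarrow> 'k mor \<Rightarrow> 'k mor" (infixr "\<otimes>" 80) is Tens
proof -
  fix f f' g g' :: "'k nbmor"
  assume a: "R f f'" "R g g'"
  show "R (Tens f g) (Tens f' g')"
  proof (rule R_I)
    fix t assume w: "wt (Tens f g)"
    show "eqv t (Tens f g) (Tens f' g')"
      using w a by (intro eqv.cong_Tens[OF R_E R_E]) auto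
  next
    show "wt (Tens f g) = wt (Tens f' g')" using a[THEN R_wt] by auto
  qed
qed

lift_definition smul :: "'k::field \<Rightarrow> 'k mor \<Rightarrow> 'k mor" is Smul
proof -
  fix c and f f' :: "'k nbmor"
  assume a: "R f f'"
  show "R (Smul c f) (Smul c f')"
  proof (rule R_I)
    fix t assume w: "wt (Smul c f)"
    show "eqv t (Smul c f) (Smul c f')"
      using w a by (intro eqv.cong_Smul[OF R_E]) auto
  next
    show "wt (Smul c f) = wt (Smul c f')" using a[THEN R_wt] by auto
  qed
qed

lemma qwt_simps[simp]:
  "qwt (qId n)" "qwt (qZr n m)" "qwt qX" "qwt qT" "qwt qCap" "qwt qCup"
  "qwt (F * G) \<longleftrightarrow> qwt F \<and> qwt G \<and> qsrc F = qtgt G"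
  "qwt (F \<otimes> G) \<longleftrightarrow> qwt F \<and> qwt G"
  "qwt (F + G) \<longleftrightarrow> qwt F \<and> qwt G \<and> qsrc F = qsrc G \<and> qtgt F = qtgt G"
  "qwt (smul c F) \<longleftrightarrow> qwt F"
  by (transfer; auto)+

lemma qsrc_simps[simp]:
  "qsrc (qId n) = n" "qsrc (qZr n m) = n" "qsrc qX = 1" "qsrc qT = 2" "qsrc qCap = 2" "qsrc qCup = 0"
  "qtgt (qId n) = n" "qtgt (qZr n m) = m" "qtgt qX = 1" "qtgt qT = 2" "qtgt qCap = 0" "qtgt qCup = 2"
  "qwt (F * G) \<Longrightarrow> qsrc (F * G) = qsrc G"
  "qwt (F * G) \<Longrightarrow> qtgt (F * G) = qtgt F"
  "qwt (F \<otimes> G) \<Longrightarrow> qsrc (F \<otimes> G) = qsrc F + qsrc G"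
  "qwt (F \<otimes> G) \<Longrightarrow> qtgt (F \<otimes> G) = qtgt F + qtgt G"
  "qwt (F + G) \<Longrightarrow> qsrc (F + G) = qsrc F"
  "qwt (F + G) \<Longrightarrow> qtgt (F + G) = qtgt F"
  "qsrc (smul c F) = qsrc F"
  "qtgt (smul c F) = qtgt F"
  by (transfer; auto)+



lemma q_mult_assoc: "(F * G) * H = F * (G * (H::'k::field mor))"
  apply transfer apply (rule R_I) apply (rule eqv.comp_assoc) by (auto simp: hom_iff split: if_splits)
lemma q_add_assoc: "(F + G) + H = F + (G + (H::'k::field mor))"
  apply transfer apply (rule R_I) apply (rule eqv.add_assoc) by (auto simp: hom_iff split: if_splits)
lemma q_add_comm: "F + G = G + (F::'k::field mor)"
  apply transfer apply (rule R_I) apply (rule eqv.add_comm) by (auto simp: hom_iff split: if_splits)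
lemma q_distrib_right: "(F + G) * H = F * H + G * (H::'k::field mor)"
  apply transfer apply (rule R_I) apply (rule eqv.comp_add_l) by (auto simp: hom_iff split: if_splits)
lemma q_distrib_left: "H * (F + G) = H * F + H * (G::'k::field mor)"
  apply transfer apply (rule R_I) apply (rule eqv.comp_add_r) by (auto simp: hom_iff split: if_splits)
lemma q_tens_assoc: "(F \<otimes> G) \<otimes> H = F \<otimes> (G \<otimes> (H::'k::field mor))"
  apply transfer apply (rule R_I) apply (rule eqv.tens_assoc) by (auto simp: hom_iff split: if_splits)
lemma q_tens_add_l: "(F + G) \<otimes> H = F \<otimes> H + G \<otimes> (H::'k::field mor)"
  apply transfer apply (rule R_I) apply (rule eqv.tens_add_l) by (auto simp: hom_iff split: if_splits)
lemma q_tens_add_r: "H \<otimes> (F + G) = H \<otimes> F + H \<otimes> (G::'k::field mor)"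
  apply transfer apply (rule R_I) apply (rule eqv.tens_add_r) by (auto simp: hom_iff split: if_splits)
lemma q_smul_one: "smul 1 F = (F::'k::field mor)"
  apply transfer apply (rule R_I) apply (rule eqv.smul_one) by (auto simp: hom_iff split: if_splits)
lemma q_smul_smul: "smul a (smul b F) = smul (a * b) (F::'k::field mor)"
  apply transfer apply (rule R_I) apply (rule eqv.smul_smul) by (auto simp: hom_iff split: if_splits)
lemma q_smul_add_scalar: "smul (a + b) F = smul a F + smul b (F::'k::field mor)"
  apply transfer apply (rule R_I) apply (rule eqv.smul_add_scalar) by (auto simp: hom_iff split: if_splits)
lemma q_smul_add: "smul a (F + G) = smul a F + smul a (G::'k::field mor)"
  apply transfer apply (rule R_I) apply (rule eqv.smul_add) by (auto simp: hom_iff split: if_splits)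
lemma q_comp_smul_l: "smul c F * G = smul c (F * (G::'k::field mor))"
  apply transfer apply (rule R_I) apply (rule eqv.comp_smul_l) by (auto simp: hom_iff split: if_splits)
lemma q_comp_smul_r: "F * smul c G = smul c (F * (G::'k::field mor))"
  apply transfer apply (rule R_I) apply (rule eqv.comp_smul_r) by (auto simp: hom_iff split: if_splits)
lemma q_tens_smul_l: "smul c F \<otimes> G = smul c (F \<otimes> (G::'k::field mor))"
  apply transfer apply (rule R_I) apply (rule eqv.tens_smul_l) by (auto simp: hom_iff split: if_splits)
lemma q_tens_smul_r: "F \<otimes> smul c G = smul c (F \<otimes> (G::'k::field mor))"
  apply transfer apply (rule R_I) apply (rule eqv.tens_smul_r) by (auto simp: hom_iff split: if_splits)
lemma q_tens_id: "qId m \<otimes> qId n = (qId (m + n) :: 'k::field mor)"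
  by (transfer, rule R_I, rule eqv.tens_id, auto)

lemma q_id_l: "qwt F \<Longrightarrow> qtgt F = m \<Longrightarrow> qId m * F = (F::'k::field mor)"
  apply transfer apply (rule R_I) apply (rule eqv.comp_id_l) by (auto simp: hom_iff split: if_splits)
lemma q_id_r: "qwt F \<Longrightarrow> qsrc F = n \<Longrightarrow> F * qId n = (F::'k::field mor)"
  apply transfer apply (rule R_I) apply (rule eqv.comp_id_r) by (auto simp: hom_iff split: if_splits)
lemma q_unit_l: "qwt F \<Longrightarrow> qId 0 \<otimes> F = (F::'k::field mor)"
  apply transfer apply (rule R_I) apply (rule eqv.tens_unit_l) by (auto simp: hom_iff split: if_splits)
lemma q_unit_r: "qwt F \<Longrightarrow> F \<otimes> qId 0 = (F::'k::field mor)"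
  apply transfer apply (rule R_I) apply (rule eqv.tens_unit_r) by (auto simp: hom_iff split: if_splits)
lemma q_add_zero: "qwt F \<Longrightarrow> qsrc F = n \<Longrightarrow> qtgt F = m \<Longrightarrow> F + qZr n m = (F::'k::field mor)"
  apply transfer apply (rule R_I) apply (rule eqv.add_zero) by (auto simp: hom_iff split: if_splits)
lemma q_add_inv: "qwt F \<Longrightarrow> qsrc F = n \<Longrightarrow> qtgt F = m \<Longrightarrow> F + smul (-1) F = (qZr n m::'k::field mor)"
  apply transfer apply (rule R_I) apply (rule eqv.add_inv) by (auto simp: hom_iff split: if_splits)
lemma q_interchange: "qwt F \<Longrightarrow> qwt F' \<Longrightarrow> qwt G \<Longrightarrow> qwt G' \<Longrightarrow> qsrc F = qtgt F' \<Longrightarrow> qsrc G = qtgt G' \<Longrightarrow>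
   (F \<otimes> G) * (F' \<otimes> G') = (F * F') \<otimes> (G * (G'::'k::field mor))"
  apply transfer apply (rule R_I) apply (rule eqv.interchange) by (auto simp: hom_iff split: if_splits)

lemma q_rel_zigzag1: "(qCap \<otimes> qId 1) * (qId 1 \<otimes> qCup) = (qId 1 :: 'k::field mor)"
  by (transfer, rule R_I, rule eqv.rel_zigzag1, auto)
lemma q_rel_zigzag2: "(qId 1 \<otimes> qCap) * (qCup \<otimes> qId 1) = (qId 1 :: 'k::field mor)"
  by (transfer, rule R_I, rule eqv.rel_zigzag2, auto)
lemma q_rel_cap_tau_slide: "(qId 1 \<otimes> qCap) * (qT \<otimes> qId 1) = (qCap \<otimes> qId 1) * (qId 1 \<otimes> (qT :: 'k::field mor))"
  by (transfer, rule R_I, rule eqv.rel_cap_tau_slide, auto)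
lemma q_rel_dot_slide: "(qX \<otimes> qId 1) * qT + smul (-1) (qT * (qId 1 \<otimes> qX)) =
   qId 1 \<otimes> qId 1 + smul (-1) (qCup * (qCap :: 'k::field mor))"
  by (transfer, rule R_I, rule eqv.rel_dot_slide, auto)
lemma q_rel_cap_dot: "qCap * (qId 1 \<otimes> qX) = smul (-1) (qCap * (qX \<otimes> (qId 1 :: 'k::field mor)))"
  by (transfer, rule R_I, rule eqv.rel_cap_dot, auto)


instance mor :: (field) semiring
  by standard (rule q_mult_assoc q_add_assoc q_add_comm q_distrib_right q_distrib_left)+

declare q_id_l[simp] q_id_r[simp] q_unit_l[simp] q_unit_r[simp] q_tens_id[simp]

lemma zr_wt: "qwt F \<Longrightarrow> qsrc F = n \<Longrightarrow> qtgt F = m \<Longrightarrow> qZr n m = F + smul (-1) (F::'k::field mor)"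
  by (simp add: q_add_inv)

lemma zr_comp_r[simp]: "qwt F \<Longrightarrow> qsrc F = m \<Longrightarrow> F * qZr n m = (qZr n (qtgt F) :: 'k::field mor)"
proof -
  assume a: "qwt F" "qsrc F = m"
  have "F * qZr n m = F * (qZr n m + smul (-1) (qZr n m))" by (simp add: q_add_inv)
  also have "\<dots> = F * qZr n m + smul (-1) (F * qZr n m)"
    by (simp add: q_distrib_left q_comp_smul_r)
  also have "\<dots> = qZr n (qtgt F)" using a by (simp add: q_add_inv)
  finally show ?thesis .
qed

lemma zr_comp_l[simp]: "qwt F \<Longrightarrow> qtgt F = n \<Longrightarrow> qZr n m * F = (qZr (qsrc F) m :: 'k::field mor)"
proof -
  assume a: "qwt F" "qtgt F = n"
  have "qZr n m * F = (qZr n m + smul (-1) (qZr n m)) * F" by (simp add: q_add_inv)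
  also have "\<dots> = qZr n m * F + smul (-1) (qZr n m * F)"
    by (simp add: q_distrib_right q_comp_smul_l)
  also have "\<dots> = qZr (qsrc F) m" using a by (simp add: q_add_inv)
  finally show ?thesis .
qed

lemma zr_tens_r[simp]: "qwt F \<Longrightarrow> F \<otimes> qZr n m = (qZr (qsrc F + n) (qtgt F + m) :: 'k::field mor)"
proof -
  assume a: "qwt F"
  have "F \<otimes> qZr n m = F \<otimes> (qZr n m + smul (-1) (qZr n m))" by (simp add: q_add_inv)
  also have "\<dots> = F \<otimes> qZr n m + smul (-1) (F \<otimes> qZr n m)"
    by (simp add: q_tens_add_r q_tens_smul_r)
  also have "\<dots> = qZr (qsrc F + n) (qtgt F + m)" using a by (simp add: q_add_inv)
  finally show ?thesis .
qed

lemma zr_tens_l[simp]: "qwt F \<Longrightarrow> qZr n m \<otimes> F = (qZr (n + qsrc F) (m + qtgt F) :: 'k::field mor)"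
proof -
  assume a: "qwt F"
  have "qZr n m \<otimes> F = (qZr n m + smul (-1) (qZr n m)) \<otimes> F" by (simp add: q_add_inv)
  also have "\<dots> = qZr n m \<otimes> F + smul (-1) (qZr n m \<otimes> F)"
    by (simp add: q_tens_add_l q_tens_smul_l)
  also have "\<dots> = qZr (n + qsrc F) (m + qtgt F)" using a by (simp add: q_add_inv)
  finally show ?thesis .
qed

lemma zr_add_r[simp]: "qwt F \<Longrightarrow> qsrc F = n \<Longrightarrow> qtgt F = m \<Longrightarrow> F + qZr n m = (F::'k::field mor)"
  by (rule q_add_zero)
lemma zr_add_l[simp]: "qwt F \<Longrightarrow> qsrc F = n \<Longrightarrow> qtgt F = m \<Longrightarrow> qZr n m + F = (F::'k::field mor)"
  by (simp add: q_add_comm[of "qZr n m"] q_add_zero)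


definition sg :: "nat \<Rightarrow> 'a::ab_group_add \<Rightarrow> 'a" where
  "sg k x = (if even k then x else - x)"

fun Sf :: "'a::{ring,monoid_mult} \<Rightarrow> 'a \<Rightarrow> nat \<Rightarrow> 'a" where
  "Sf a b 0 = 0"
| "Sf a b (Suc k) = a * Sf a b k + b ^ k"

fun Uf :: "'a::{ring,monoid_mult} \<Rightarrow> 'a \<Rightarrow> 'a \<Rightarrow> nat \<Rightarrow> 'a" where
  "Uf a b e 0 = 0"
| "Uf a b e (Suc k) = a * Uf a b e k + e * b ^ k"

lemma pow_comm_gen:
  fixes a b :: "'a::monoid_mult"
  assumes "a * b = b * a"
  shows "a ^ k * b = b * a ^ k"
proof (induction k)
  case 0 then show ?case by simp
next
  case (Suc k)
  have "a ^ Suc k * b = a * (a ^ k * b)" by (simp add: mult.assoc)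
  also have "\<dots> = a * (b * a ^ k)" using Suc by simp
  also have "\<dots> = (a * b) * a ^ k" by (simp add: mult.assoc)
  also have "\<dots> = b * a ^ Suc k" using assms by (simp add: mult.assoc)
  finally show ?case .
qed

lemma ring_key:
  fixes x1 x2 t e :: "'a::{ring,monoid_mult}"
  assumes c12: "x1 * x2 = x2 * x1"
    and rb: "x1 * t - t * x2 = 1 - e"
    and rc: "t * x1 - x2 * t = 1 - e"
    and rd: "e * x2 = - (e * x1)"
    and re: "x2 * e = - (x1 * e)"
    and odd: "odd r"
  shows "(x1 ^ r + x2 ^ r) * t = t * (x1 ^ r + x2 ^ r)"
proof -
  have tx2: "t * x2 = x1 * t - 1 + e" using rb by (simp add: algebra_simps)
  have tx1: "t * x1 = x2 * t + 1 - e" using rc by (simp add: algebra_simps)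
  have D: "x1 ^ k * t - t * x2 ^ k = Sf x1 x2 k - Uf x1 x2 e k" for k
  proof (induction k)
    case 0 then show ?case by simp
  next
    case (Suc k)
    have "x1 ^ Suc k * t - t * x2 ^ Suc k = x1 * (x1 ^ k * t) - (t * x2) * x2 ^ k"
      by (simp add: mult.assoc)
    also have "\<dots> = x1 * (x1 ^ k * t - t * x2 ^ k) + x2 ^ k - e * x2 ^ k"
      unfolding tx2 by (simp add: algebra_simps)
    also have "\<dots> = Sf x1 x2 (Suc k) - Uf x1 x2 e (Suc k)"
      unfolding Suc by (simp add: algebra_simps)
    finally show ?case .
  qed
  have D': "t * x1 ^ k - x2 ^ k * t = Sf x2 x1 k - Uf x2 x1 e k" for k
  proof (induction k)
    case 0 then show ?case by simp
  next
    case (Suc k)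
    have "t * x1 ^ Suc k - x2 ^ Suc k * t = (t * x1) * x1 ^ k - x2 * (x2 ^ k * t)"
      by (simp add: mult.assoc)
    also have "\<dots> = x2 * (t * x1 ^ k - x2 ^ k * t) + x1 ^ k - e * x1 ^ k"
      unfolding tx1 by (simp add: algebra_simps)
    also have "\<dots> = Sf x2 x1 (Suc k) - Uf x2 x1 e (Suc k)"
      unfolding Suc by (simp add: algebra_simps)
    finally show ?case .
  qed
  have L1: "(x1 - x2) * Sf x1 x2 k = x1 ^ k - x2 ^ k" for k
  proof (induction k)
    case 0 then show ?case by simp
  next
    case (Suc k)
    have "(x1 - x2) * Sf x1 x2 (Suc k) = ((x1 - x2) * x1) * Sf x1 x2 k + (x1 - x2) * x2 ^ k"
      by (simp add: algebra_simps)
    also have "(x1 - x2) * x1 = x1 * (x1 - x2)" using c12 by (simp add: algebra_simps)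
    also have "x1 * (x1 - x2) * Sf x1 x2 k = x1 * (x1 ^ k - x2 ^ k)"
      using Suc by (simp add: mult.assoc)
    finally show ?case by (simp add: algebra_simps)
  qed
  have L2: "Sf x1 x2 k = Sf x2 x1 k" for k
  proof (induction k)
    case 0 then show ?case by simp
  next
    case (Suc k)
    have "Sf x2 x1 (Suc k) = x2 * Sf x1 x2 k + x1 ^ k" using Suc by simp
    also have "\<dots> = x2 * Sf x1 x2 k + ((x1 - x2) * Sf x1 x2 k + x2 ^ k)"
      using L1[of k] by (simp add: algebra_simps)
    also have "\<dots> = Sf x1 x2 (Suc k)" by (simp add: algebra_simps)
    finally show ?case by simp
  qed
  have U1: "x2 * Uf x1 x2 e k = - (x1 * Uf x1 x2 e k)" for k
  proof (induction k)
    case 0 then show ?case by simp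
  next
    case (Suc k)
    have "x2 * Uf x1 x2 e (Suc k) = (x2 * x1) * Uf x1 x2 e k + (x2 * e) * x2 ^ k"
      by (simp add: algebra_simps)
    also have "\<dots> = x1 * (x2 * Uf x1 x2 e k) - x1 * e * x2 ^ k"
      using re by (simp add: c12[symmetric] mult.assoc)
    also have "\<dots> = - (x1 * Uf x1 x2 e (Suc k))"
      using Suc by (simp add: algebra_simps)
    finally show ?case .
  qed
  have E1: "e * x2 ^ k = sg k (e * x1 ^ k)" for k
  proof (induction k)
    case 0 then show ?case by (simp add: sg_def)
  next
    case (Suc k)
    have "e * x2 ^ Suc k = (e * x2 ^ k) * x2" by (simp only: power_Suc2 mult.assoc)
    also have "\<dots> = sg k (e * x1 ^ k * x2)" using Suc by (simp add: sg_def)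
    also have "e * x1 ^ k * x2 = (e * x2) * x1 ^ k"
      using pow_comm_gen[OF c12, of k] by (simp add: mult.assoc)
    also have "\<dots> = - (e * x1 ^ Suc k)" using rd by (simp add: mult.assoc)
    finally show ?case by (simp add: sg_def)
  qed
  have U2: "Uf x2 x1 e k = sg (Suc k) (Uf x1 x2 e k)" for k
  proof (induction k)
    case 0 then show ?case by (simp add: sg_def)
  next
    case (Suc k)
    have "Uf x2 x1 e (Suc k) = x2 * sg (Suc k) (Uf x1 x2 e k) + e * x1 ^ k"
      using Suc by simp
    also have "\<dots> = sg (Suc (Suc k)) (Uf x1 x2 e (Suc k))"
      using U1[of k] E1[of k] by (auto simp: sg_def algebra_simps)
    finally show ?case .
  qed
  have "(x1 ^ r + x2 ^ r) * t - t * (x1 ^ r + x2 ^ r)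
      = (x1 ^ r * t - t * x2 ^ r) - (t * x1 ^ r - x2 ^ r * t)"
    by (simp add: algebra_simps)
  also have "\<dots> = 0"
    unfolding D D' L2[of r] U2[of r] using odd by (simp add: sg_def)
  finally show ?thesis by simp
qed


declare One_nat_def [simp del]

lemma split1: "qwt F \<Longrightarrow> qwt G \<Longrightarrow> (F \<otimes> qId (qtgt G)) * (qId (qsrc F) \<otimes> G) = F \<otimes> (G::'k::field mor)"
  by (subst q_interchange) auto
lemma split2: "qwt F \<Longrightarrow> qwt G \<Longrightarrow> (qId (qtgt F) \<otimes> G) * (F \<otimes> qId (qsrc G)) = F \<otimes> (G::'k::field mor)"
  by (subst q_interchange) auto
lemma tcl: "qwt A \<Longrightarrow> qwt B \<Longrightarrow> qsrc A = qtgt B \<Longrightarrow> (A * B) \<otimes> qId k = (A \<otimes> qId k) * (B \<otimes> (qId k::'k::field mor))"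
  by (subst q_interchange) auto
lemma tcr: "qwt A \<Longrightarrow> qwt B \<Longrightarrow> qsrc A = qtgt B \<Longrightarrow> qId k \<otimes> (A * B) = (qId k \<otimes> A) * (qId k \<otimes> (B::'k::field mor))"
  by (subst q_interchange) auto

abbreviation X1 :: "'k::field mor" where "X1 \<equiv> qX \<otimes> qId 1"
abbreviation X2 :: "'k::field mor" where "X2 \<equiv> qId 1 \<otimes> qX"

lemma X12_comm: "X1 * X2 = (X2 * X1 :: 'k::field mor)"
proof -
  have "X1 * X2 = (qX \<otimes> qX :: 'k mor)" using split1[of qX qX] by simp
  moreover have "X2 * X1 = (qX \<otimes> qX :: 'k mor)" using split2[of qX qX] by simp
  ultimately show ?thesis by simp
qed

lemma I2: "qId 2 = qId 1 \<otimes> (qId 1 :: 'k::field mor)" by simp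
lemma I3: "qId 3 = qId 1 \<otimes> (qId 2 :: 'k::field mor)" by simp
lemma I3': "qId 3 = qId 2 \<otimes> (qId 1 :: 'k::field mor)" by simp

lemma cupdot: "X1 * qCup = smul (-1) (X2 * (qCup :: 'k::field mor))"
proof -
  let ?W = "X2 * (qCup :: 'k mor)"
  have s1: "(qCup \<otimes> qId 1) * qX = (qId 2 \<otimes> qX) * (qCup \<otimes> (qId 1 :: 'k mor))"
  proof -
    have "(qCup \<otimes> qId 1) * qX = (qCup \<otimes> (qX :: 'k mor))" using split1[of qCup qX] by simp
    moreover have "(qId 2 \<otimes> qX) * (qCup \<otimes> qId 1) = (qCup \<otimes> (qX :: 'k mor))" using split2[of qCup qX] by simp
    ultimately show ?thesis by simp
  qed
  have s2: "(qId 1 \<otimes> qCap) * (qId 2 \<otimes> qX) = smul (-1) ((qId 1 \<otimes> qCap) * (qId 1 \<otimes> (qX \<otimes> (qId 1 :: 'k mor))))"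
  proof -
    have "(qId 1 \<otimes> qCap) * (qId 2 \<otimes> qX) = (qId 1 \<otimes> qCap) * (qId 1 \<otimes> (qId 1 \<otimes> (qX :: 'k mor)))"
      by (simp add: q_tens_assoc[symmetric])
    also have "\<dots> = qId 1 \<otimes> (qCap * (qId 1 \<otimes> qX))" by (subst q_interchange) auto
    also have "\<dots> = qId 1 \<otimes> smul (-1) (qCap * X1)" by (simp add: q_rel_cap_dot)
    also have "\<dots> = smul (-1) ((qId 1 \<otimes> qCap) * (qId 1 \<otimes> X1))"
      by (simp add: q_tens_smul_r tcr)
    finally show ?thesis .
  qed
  have s3: "(qId 1 \<otimes> (qX \<otimes> qId 1)) * (qCup \<otimes> qId 1) = ?W \<otimes> (qId 1 :: 'k mor)"
    by (simp add: q_tens_assoc[symmetric] tcl)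
  have s4: "qX = smul (-1) ((qId 1 \<otimes> qCap) * (?W \<otimes> (qId 1 :: 'k mor)))"
  proof -
    have "(qX :: 'k mor) = ((qId 1 \<otimes> qCap) * (qCup \<otimes> qId 1)) * qX" by (simp add: q_rel_zigzag2)
    also have "\<dots> = (qId 1 \<otimes> qCap) * ((qId 2 \<otimes> qX) * (qCup \<otimes> (qId 1 :: 'k mor)))"
      by (simp add: q_mult_assoc s1)
    also have "\<dots> = smul (-1) ((qId 1 \<otimes> qCap) * ((qId 1 \<otimes> (qX \<otimes> qId 1)) * (qCup \<otimes> (qId 1 :: 'k mor))))"
      by (simp add: q_mult_assoc[symmetric] s2 q_comp_smul_l)
    also have "\<dots> = smul (-1) ((qId 1 \<otimes> qCap) * (?W \<otimes> (qId 1 :: 'k mor)))"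
      by (simp only: s3)
    finally show ?thesis .
  qed
  have Z1: "(qId 1 \<otimes> (qCap \<otimes> qId 1)) * (qId 2 \<otimes> qCup) = (qId 2 :: 'k mor)"
  proof -
    have "(qId 1 \<otimes> (qCap \<otimes> qId 1)) * (qId 2 \<otimes> qCup) = (qId 1 \<otimes> (qCap \<otimes> qId 1)) * (qId 1 \<otimes> (qId 1 \<otimes> (qCup :: 'k mor)))"
      by (simp add: q_tens_assoc[symmetric])
    also have "\<dots> = qId 1 \<otimes> ((qCap \<otimes> qId 1) * (qId 1 \<otimes> qCup))" by (subst tcr) auto
    also have "\<dots> = qId 2" by (simp add: q_rel_zigzag1)
    finally show ?thesis .
  qed
  have "X1 * qCup = ((smul (-1) ((qId 1 \<otimes> qCap) * (?W \<otimes> qId 1))) \<otimes> qId 1) * (qCup :: 'k mor)"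
    by (rule arg_cong[OF s4, of "\<lambda>z. (z \<otimes> qId 1) * qCup"])
  also have "\<dots> = smul (-1) ((((qId 1 \<otimes> qCap) \<otimes> qId 1) * ((?W \<otimes> qId 1) \<otimes> qId 1)) * qCup)"
    by (simp add: q_tens_smul_l q_comp_smul_l tcl)
  also have "\<dots> = smul (-1) (((qId 1 \<otimes> (qCap \<otimes> qId 1)) * (?W \<otimes> qId 2)) * qCup)"
    by (simp add: q_tens_assoc)
  also have "\<dots> = smul (-1) ((qId 1 \<otimes> (qCap \<otimes> qId 1)) * ((?W \<otimes> qId 2) * qCup))"
    by (simp only: q_mult_assoc)
  also have "(?W \<otimes> qId 2) * qCup = (qId 2 \<otimes> qCup) * ?W"
  proof -
    have "(?W \<otimes> qId 2) * qCup = ?W \<otimes> qCup" using split1[of ?W qCup] by simp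
    moreover have "(qId 2 \<otimes> qCup) * ?W = ?W \<otimes> qCup" using split2[of ?W qCup] by simp
    ultimately show ?thesis by simp
  qed
  also have "smul (-1) ((qId 1 \<otimes> (qCap \<otimes> qId 1)) * ((qId 2 \<otimes> qCup) * ?W)) = smul (-1) ?W"
    by (simp add: q_mult_assoc[symmetric] Z1)
  finally show ?thesis .
qed


lemma Z1: "(qId 1 \<otimes> (qCap \<otimes> qId 1)) * (qId 2 \<otimes> qCup) = (qId 2 :: 'k::field mor)"
proof -
  have "(qId 1 \<otimes> (qCap \<otimes> qId 1)) * (qId 2 \<otimes> qCup) = (qId 1 \<otimes> (qCap \<otimes> qId 1)) * (qId 1 \<otimes> (qId 1 \<otimes> (qCup :: 'k mor)))"
    by (simp add: q_tens_assoc[symmetric])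
  also have "\<dots> = qId 1 \<otimes> ((qCap \<otimes> qId 1) * (qId 1 \<otimes> qCup))" by (subst tcr) auto
  also have "\<dots> = qId 2" by (simp add: q_rel_zigzag1)
  finally show ?thesis .
qed

lemma Z2: "(qCap \<otimes> qId 2) * (qId 1 \<otimes> (qCup \<otimes> qId 1)) = (qId 2 :: 'k::field mor)"
proof -
  have "(qCap \<otimes> qId 2) * (qId 1 \<otimes> (qCup \<otimes> qId 1)) = ((qCap \<otimes> qId 1) \<otimes> qId 1) * ((qId 1 \<otimes> qCup) \<otimes> (qId 1 :: 'k mor))"
    by (simp add: q_tens_assoc)
  also have "\<dots> = ((qCap \<otimes> qId 1) * (qId 1 \<otimes> qCup)) \<otimes> qId 1" by (subst tcl) auto
  also have "\<dots> = qId 2" by (simp add: q_rel_zigzag1)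
  finally show ?thesis .
qed

definition Kf :: "'k::field mor \<Rightarrow> 'k mor" where
  "Kf f = (f \<otimes> qId 1) * (qId 1 \<otimes> qCup)"
definition rho :: "'k::field mor \<Rightarrow> 'k mor" where
  "rho f = (qCap \<otimes> qId 2) * (qId 1 \<otimes> Kf f)"

lemma rho_add: "rho (f + g) = rho f + rho g"
  unfolding rho_def Kf_def by (simp add: q_tens_add_l q_tens_add_r q_distrib_left q_distrib_right)
lemma rho_smul: "rho (smul c f) = smul c (rho f)"
  unfolding rho_def Kf_def by (simp add: q_tens_smul_l q_tens_smul_r q_comp_smul_l q_comp_smul_r)

lemma KT_wt[simp]: "qwt (Kf qT)" "qsrc (Kf qT) = 1" "qtgt (Kf qT) = 3"
  unfolding Kf_def by simp_all

lemma rho_T: "rho qT = (qT :: 'k::field mor)"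
proof -
  have a: "qId 1 \<otimes> Kf qT = (qId 1 \<otimes> (qT \<otimes> qId 1)) * (qId 2 \<otimes> (qCup :: 'k mor))"
    unfolding Kf_def by (subst tcr) (auto simp: q_tens_assoc[symmetric])
  have b: "(qCap \<otimes> qId 2) * (qId 1 \<otimes> (qT \<otimes> qId 1)) = (qId 1 \<otimes> (qCap \<otimes> qId 1)) * (qT \<otimes> (qId 2 :: 'k mor))"
  proof -
    have "(qCap \<otimes> qId 2) * (qId 1 \<otimes> (qT \<otimes> qId 1)) = ((qCap \<otimes> qId 1) \<otimes> qId 1) * ((qId 1 \<otimes> qT) \<otimes> (qId 1 :: 'k mor))"
      by (simp add: q_tens_assoc)
    also have "\<dots> = ((qCap \<otimes> qId 1) * (qId 1 \<otimes> qT)) \<otimes> qId 1" by (subst tcl) auto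
    also have "\<dots> = ((qId 1 \<otimes> qCap) * (qT \<otimes> qId 1)) \<otimes> qId 1" by (simp add: q_rel_cap_tau_slide)
    also have "\<dots> = ((qId 1 \<otimes> qCap) \<otimes> qId 1) * ((qT \<otimes> qId 1) \<otimes> qId 1)" by (subst tcl) auto
    also have "\<dots> = (qId 1 \<otimes> (qCap \<otimes> qId 1)) * (qT \<otimes> (qId 2 :: 'k mor))" by (simp add: q_tens_assoc)
    finally show ?thesis .
  qed
  have c: "(qT \<otimes> qId 2) * (qId 2 \<otimes> qCup) = (qId 2 \<otimes> qCup) * (qT :: 'k mor)"
  proof -
    have "(qT \<otimes> qId 2) * (qId 2 \<otimes> qCup) = (qT \<otimes> (qCup :: 'k mor))" using split1[of qT qCup] by simp
    moreover have "(qId 2 \<otimes> qCup) * qT = (qT \<otimes> (qCup :: 'k mor))" using split2[of qT qCup] by simp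
    ultimately show ?thesis by simp
  qed
  have "rho qT = ((qCap \<otimes> qId 2) * (qId 1 \<otimes> (qT \<otimes> qId 1))) * (qId 2 \<otimes> (qCup :: 'k mor))"
    unfolding rho_def a by (simp add: q_mult_assoc)
  also have "\<dots> = (qId 1 \<otimes> (qCap \<otimes> qId 1)) * ((qT \<otimes> qId 2) * (qId 2 \<otimes> qCup))"
    unfolding b by (simp add: q_mult_assoc)
  also have "\<dots> = ((qId 1 \<otimes> (qCap \<otimes> qId 1)) * (qId 2 \<otimes> qCup)) * qT"
    unfolding c by (simp add: q_mult_assoc)
  also have "\<dots> = qT" by (simp add: Z1)
  finally show ?thesis .
qed

abbreviation EE :: "'k::field mor" where "EE \<equiv> qCup * qCap"

lemma rho_I: "rho (qId 2) = (EE :: 'k::field mor)"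
proof -
  have "rho (qId 2) = (qCap \<otimes> qId 2) * (qId 2 \<otimes> (qCup :: 'k mor))"
    unfolding rho_def Kf_def by (simp add: q_tens_assoc[symmetric])
  also have "\<dots> = qCap \<otimes> qCup" using split1[of qCap qCup] by simp
  also have "\<dots> = EE" using split2[of qCap "qCup :: 'k mor"] by simp
  finally show ?thesis .
qed

lemma rho_E: "rho EE = (qId 2 :: 'k::field mor)"
proof -
  have "Kf EE = (qCup \<otimes> qId 1) * ((qCap \<otimes> qId 1) * (qId 1 \<otimes> (qCup :: 'k mor)))"
    unfolding Kf_def by (subst tcl) (auto simp: q_mult_assoc)
  also have "\<dots> = qCup \<otimes> qId 1" by (simp add: q_rel_zigzag1)
  finally have "Kf EE = (qCup \<otimes> qId 1 :: 'k mor)" .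
  then show ?thesis unfolding rho_def by (simp add: Z2)
qed

lemma rho_X1T: "rho (X1 * qT) = smul (-1) (qT * (X1 :: 'k::field mor))"
proof -
  have k: "Kf (X1 * qT) = (qX \<otimes> qId 2) * Kf (qT :: 'k mor)"
    unfolding Kf_def by (subst tcl) (auto simp: q_mult_assoc q_tens_assoc)
  have a: "(qCap \<otimes> qId 2) * (qId 1 \<otimes> (qX \<otimes> qId 2)) = smul (-1) ((qCap \<otimes> qId 2) * (qX \<otimes> (qId 3 :: 'k mor)))"
  proof -
    have "(qCap \<otimes> qId 2) * (qId 1 \<otimes> (qX \<otimes> qId 2)) = (qCap \<otimes> qId 2) * (X2 \<otimes> (qId 2 :: 'k mor))"
      by (simp add: q_tens_assoc)
    also have "\<dots> = (qCap * X2) \<otimes> qId 2" by (subst tcl) auto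
    also have "\<dots> = smul (-1) ((qCap * X1) \<otimes> qId 2)" by (simp add: q_rel_cap_dot q_tens_smul_l)
    also have "\<dots> = smul (-1) ((qCap \<otimes> qId 2) * (X1 \<otimes> qId 2))" by (subst tcl) auto
    also have "\<dots> = smul (-1) ((qCap \<otimes> qId 2) * (qX \<otimes> (qId 3 :: 'k mor)))" by (simp add: q_tens_assoc)
    finally show ?thesis .
  qed
  have b: "(qX \<otimes> qId 3) * (qId 1 \<otimes> Kf qT) = (qId 1 \<otimes> Kf qT) * (X1 :: 'k mor)"
  proof -
    have "(qX \<otimes> qId 3) * (qId 1 \<otimes> Kf qT) = (qX \<otimes> Kf (qT :: 'k mor))" using split1[of qX "Kf qT"] by simp
    moreover have "(qId 1 \<otimes> Kf qT) * X1 = (qX \<otimes> Kf (qT :: 'k mor))" using split2[of qX "Kf qT"] by simp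
    ultimately show ?thesis by simp
  qed
  have "rho (X1 * qT) = ((qCap \<otimes> qId 2) * (qId 1 \<otimes> (qX \<otimes> qId 2))) * (qId 1 \<otimes> Kf (qT :: 'k mor))"
    unfolding rho_def k by (subst tcr) (auto simp: q_mult_assoc Kf_def)
  also have "\<dots> = smul (-1) ((qCap \<otimes> qId 2) * ((qX \<otimes> qId 3) * (qId 1 \<otimes> Kf qT)))"
    unfolding a by (simp add: q_comp_smul_l q_mult_assoc)
  also have "\<dots> = smul (-1) (rho qT * X1)"
    unfolding b rho_def by (simp add: q_mult_assoc)
  finally show ?thesis by (simp add: rho_T)
qed

lemma rho_TX2: "rho (qT * X2) = smul (-1) (X2 * (qT :: 'k::field mor))"
proof -
  have a: "(X2 \<otimes> qId 1) * (qId 1 \<otimes> qCup) = smul (-1) ((qId 2 \<otimes> qX) * (qId 1 \<otimes> (qCup :: 'k mor)))"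
  proof -
    have "(X2 \<otimes> qId 1) * (qId 1 \<otimes> qCup) = (qId 1 \<otimes> X1) * (qId 1 \<otimes> (qCup :: 'k mor))"
      by (simp add: q_tens_assoc)
    also have "\<dots> = qId 1 \<otimes> (X1 * qCup)" by (subst tcr) auto
    also have "\<dots> = smul (-1) (qId 1 \<otimes> (X2 * qCup))" by (simp add: cupdot q_tens_smul_r)
    also have "\<dots> = smul (-1) ((qId 1 \<otimes> X2) * (qId 1 \<otimes> qCup))" by (subst tcr) auto
    also have "\<dots> = smul (-1) ((qId 2 \<otimes> qX) * (qId 1 \<otimes> (qCup :: 'k mor)))" by (simp add: q_tens_assoc[symmetric])
    finally show ?thesis .
  qed
  have b: "(qT \<otimes> qId 1) * (qId 2 \<otimes> qX) = (qId 2 \<otimes> qX) * (qT \<otimes> (qId 1 :: 'k mor))"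
  proof -
    have "(qT \<otimes> qId 1) * (qId 2 \<otimes> qX) = (qT \<otimes> (qX :: 'k mor))" using split1[of qT qX] by simp
    moreover have "(qId 2 \<otimes> qX) * (qT \<otimes> qId 1) = (qT \<otimes> (qX :: 'k mor))" using split2[of qT qX] by simp
    ultimately show ?thesis by simp
  qed
  have k: "Kf (qT * X2) = smul (-1) ((qId 2 \<otimes> qX) * Kf (qT :: 'k mor))"
  proof -
    have "Kf (qT * X2) = (qT \<otimes> qId 1) * ((X2 \<otimes> qId 1) * (qId 1 \<otimes> (qCup :: 'k mor)))"
      unfolding Kf_def by (subst tcl) (auto simp: q_mult_assoc)
    also have "\<dots> = smul (-1) (((qT \<otimes> qId 1) * (qId 2 \<otimes> qX)) * (qId 1 \<otimes> (qCup :: 'k mor)))"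
      unfolding a by (simp add: q_comp_smul_r q_mult_assoc)
    also have "\<dots> = smul (-1) ((qId 2 \<otimes> qX) * Kf (qT :: 'k mor))"
      unfolding b Kf_def by (simp add: q_mult_assoc)
    finally show ?thesis .
  qed
  have c: "(qCap \<otimes> qId 2) * (qId 3 \<otimes> qX) = X2 * (qCap \<otimes> (qId 2 :: 'k mor))"
  proof -
    have e: "qId 3 \<otimes> qX = qId 2 \<otimes> (X2 :: 'k mor)" by (simp add: q_tens_assoc[symmetric])
    have "(qCap \<otimes> qId 2) * (qId 2 \<otimes> X2) = (qCap \<otimes> (X2 :: 'k mor))" using split1[of qCap X2] by simp
    moreover have "X2 * (qCap \<otimes> qId 2) = (qCap \<otimes> (X2 :: 'k mor))" using split2[of qCap X2] by simp
    ultimately show ?thesis unfolding e by simp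
  qed
  have k2: "qId 1 \<otimes> Kf (qT * X2) = smul (-1) ((qId 3 \<otimes> qX) * (qId 1 \<otimes> Kf (qT :: 'k mor)))"
    unfolding k by (simp add: q_tens_smul_r tcr q_tens_assoc[symmetric])
  have "rho (qT * X2) = smul (-1) (((qCap \<otimes> qId 2) * (qId 3 \<otimes> qX)) * (qId 1 \<otimes> Kf (qT :: 'k mor)))"
    unfolding rho_def k2 by (simp add: q_comp_smul_r q_mult_assoc)
  also have "\<dots> = smul (-1) (X2 * rho qT)"
    unfolding c rho_def by (simp add: q_mult_assoc)
  finally show ?thesis by (simp add: rho_T)
qed


declare One_nat_def [simp del]

typedef (overloaded) 'k e2 = "{F :: 'k::field mor. qwt F \<and> qsrc F = 2 \<and> qtgt F = 2}"
  by (rule exI[of _ "qId 2"]) simp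

setup_lifting type_definition_e2

instantiation e2 :: (field) "{ring, monoid_mult}"
begin
lift_definition zero_e2 :: "'a e2" is "qZr 2 2" by simp
lift_definition one_e2 :: "'a e2" is "qId 2" by simp
lift_definition plus_e2 :: "'a e2 \<Rightarrow> 'a e2 \<Rightarrow> 'a e2" is "(+)" by simp
lift_definition uminus_e2 :: "'a e2 \<Rightarrow> 'a e2" is "smul (-1)" by simp
lift_definition minus_e2 :: "'a e2 \<Rightarrow> 'a e2 \<Rightarrow> 'a e2" is "\<lambda>a b. a + smul (-1) b" by simp
lift_definition times_e2 :: "'a e2 \<Rightarrow> 'a e2 \<Rightarrow> 'a e2" is "(*)" by simp
instance
proof
  fix a b c :: "'a e2"
  show "a + b + c = a + (b + c)" by transfer (rule q_add_assoc)
  show "a + b = b + a" by transfer (rule q_add_comm)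
  show "0 + a = a" by transfer simp
  show "- a + a = 0" by transfer (simp add: q_add_comm[of "smul (-1) _"] q_add_inv)
  show "a - b = a + - b" by transfer simp
  show "a * b * c = a * (b * c)" by transfer (rule q_mult_assoc)
  show "(a + b) * c = a * c + b * c" by transfer (rule q_distrib_right)
  show "a * (b + c) = a * b + a * c" by transfer (rule q_distrib_left)
  show "1 * a = a" by transfer simp
  show "a * 1 = a" by transfer simp
qed
end


lift_definition ex1 :: "'k::field e2" is X1 by simp
lift_definition ex2 :: "'k::field e2" is X2 by simp
lift_definition et :: "'k::field e2" is qT by simp
lift_definition ee :: "'k::field e2" is EE by simp

lemma e_c12: "ex1 * ex2 = (ex2 * ex1 :: 'k::field e2)"
  by transfer (rule X12_comm)

lemma e_rb: "ex1 * et - et * ex2 = (1 - ee :: 'k::field e2)"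
  by transfer (use q_rel_dot_slide in simp)

lemma e_rc0: "- (et * ex1) + ex2 * et = (ee - 1 :: 'k::field e2)"
proof transfer
  have "rho ((X1 * qT) + smul (-1) (qT * X2)) = rho (qId 1 \<otimes> qId 1 + smul (-1) (EE :: 'k mor))"
    by (rule arg_cong[OF q_rel_dot_slide])
  then show "smul (-1) (qT * X1) + X2 * qT = EE + smul (-1) (qId 2 :: 'k mor)"
    by (simp add: rho_add rho_smul rho_X1T rho_TX2 rho_I rho_E q_smul_smul q_smul_one)
qed

lemma e_rc: "et * ex1 - ex2 * et = (1 - ee :: 'k::field e2)"
proof -
  have "- (et * ex1) + ex2 * et = (ee - 1 :: 'k e2)" by (rule e_rc0)
  then have "- (- (et * ex1) + ex2 * et) = - (ee - 1 :: 'k e2)" by simp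
  then show ?thesis by (simp add: algebra_simps)
qed

lemma e_rd: "ee * ex2 = - (ee * ex1 :: 'k::field e2)"
proof transfer
  show "EE * X2 = smul (-1) (EE * (X1 :: 'k mor))"
    by (simp add: q_mult_assoc q_rel_cap_dot q_comp_smul_r)
qed

lemma e_re: "ex2 * ee = - (ex1 * ee :: 'k::field e2)"
proof -
  have "ex1 * ee = - (ex2 * ee :: 'k e2)"
  proof transfer
    show "X1 * EE = smul (-1) (X2 * (EE :: 'k mor))"
      by (simp add: q_mult_assoc[symmetric] cupdot q_comp_smul_l)
  qed
  then show ?thesis by simp
qed

lemma e_key: "odd r \<Longrightarrow> (ex1 ^ r + ex2 ^ r) * et = et * (ex1 ^ r + ex2 ^ r :: 'k::field e2)"
  by (rule ring_key[OF e_c12 e_rb e_rc e_rd e_re])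

fun qpow :: "nat \<Rightarrow> 'k::field mor \<Rightarrow> nat \<Rightarrow> 'k mor" where
  "qpow n F 0 = qId n"
| "qpow n F (Suc k) = F * qpow n F k"

lemma rep_pow: "Rep_e2 (a ^ k) = qpow 2 (Rep_e2 a) k"
  by (induction k) (simp_all add: one_e2.rep_eq times_e2.rep_eq)

lemma tau_central: "odd r \<Longrightarrow> (qpow 2 X1 r + qpow 2 X2 r) * qT = qT * (qpow 2 X1 r + qpow 2 X2 (r::nat) :: 'k::field mor)"
proof -
  assume "odd r"
  then have "Rep_e2 ((ex1 ^ r + ex2 ^ r) * et) = Rep_e2 (et * (ex1 ^ r + ex2 ^ r :: 'k e2))"
    using e_key by metis
  then show ?thesis
    by (simp add: rep_pow times_e2.rep_eq plus_e2.rep_eq ex1.rep_eq ex2.rep_eq et.rep_eq)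
qed


declare One_nat_def [simp del]

definition xq :: "nat \<Rightarrow> nat \<Rightarrow> 'k::field mor" where
  "xq n i = qId (i - 1) \<otimes> (qX \<otimes> qId (n - i))"

fun ppq :: "nat \<Rightarrow> nat \<Rightarrow> nat \<Rightarrow> 'k::field mor" where
  "ppq r n 0 = qZr n n"
| "ppq r n (Suc k) = ppq r n k + qpow n (xq n (Suc k)) r"

definition Ps :: "nat \<Rightarrow> nat \<Rightarrow> 'k::field mor" where
  "Ps r n = ppq r n n"

lemma abs_xvar: "abs_mor (xvar n i) = (xq n i :: 'k::field mor)"
  by (simp add: xvar_def xq_def qId.abs_eq qX.abs_eq tens.abs_eq)

lemma abs_cpow: "abs_mor (cpow n f r) = qpow n (abs_mor f :: 'k::field mor) r"
  by (induction r) (simp_all add: qId.abs_eq times_mor.abs_eq[symmetric])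

lemma abs_pp: "abs_mor (psum_part r n k) = (ppq r n k :: 'k::field mor)"
  by (induction k) (simp_all add: qZr.abs_eq plus_mor.abs_eq[symmetric] abs_cpow abs_xvar)

lemma abs_psum: "abs_mor (psum r n) = (Ps r n :: 'k::field mor)"
  by (simp add: psum_def Ps_def abs_pp)

lemma qpow_wt: "qwt F \<Longrightarrow> qsrc F = n \<Longrightarrow> qtgt F = n \<Longrightarrow>
   qwt (qpow n F k) \<and> qsrc (qpow n F k) = n \<and> qtgt (qpow n (F::'k::field mor) k) = n"
  by (induction k) auto

lemma xq_wt: "1 \<le> i \<Longrightarrow> i \<le> n \<Longrightarrow> qwt (xq n i :: 'k::field mor) \<and> qsrc (xq n i :: 'k mor) = n \<and> qtgt (xq n i :: 'k mor) = n"
  by (simp add: xq_def)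

lemma ppq_wt: "k \<le> n \<Longrightarrow> qwt (ppq r n k :: 'k::field mor) \<and> qsrc (ppq r n k :: 'k mor) = n \<and> qtgt (ppq r n k :: 'k mor) = n"
proof (induction k)
  case 0 then show ?case by simp
next
  case (Suc k)
  have "qwt (qpow n (xq n (Suc k)) r :: 'k mor) \<and> qsrc (qpow n (xq n (Suc k)) r :: 'k mor) = n \<and> qtgt (qpow n (xq n (Suc k) :: 'k mor) r) = n"
    using xq_wt[of "Suc k" n, where 'k='k] qpow_wt[of "xq n (Suc k) :: 'k mor" n r] Suc.prems by auto
  then show ?case using Suc by auto
qed

lemma Ps_wt[simp]: "qwt (Ps r n :: 'k::field mor)" "qsrc (Ps r n :: 'k::field mor) = n" "qtgt (Ps r n :: 'k::field mor) = n"
  using ppq_wt[of n n r, where 'k='k] by (auto simp: Ps_def)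

lemma pow_tens_r: "qwt F \<Longrightarrow> qsrc F = n \<Longrightarrow> qtgt F = n \<Longrightarrow>
   qpow (n + k) (F \<otimes> qId k) j = qpow n F j \<otimes> (qId k :: 'k::field mor)"
proof (induction j)
  case 0 then show ?case by simp
next
  case (Suc j)
  then show ?case using qpow_wt[of F n j] by (simp add: q_interchange)
qed

lemma pow_tens_l: "qwt F \<Longrightarrow> qsrc F = n \<Longrightarrow> qtgt F = n \<Longrightarrow>
   qpow (k + n) (qId k \<otimes> F) j = qId k \<otimes> (qpow n F j :: 'k::field mor)"
proof (induction j)
  case 0 then show ?case by simp
next
  case (Suc j)
  then show ?case using qpow_wt[of F n j] by (simp add: q_interchange)
qed

lemma xq_split_l: "1 \<le> i \<Longrightarrow> i \<le> a \<Longrightarrow> xq (a + b) i = xq a i \<otimes> (qId b :: 'k::field mor)"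
  unfolding xq_def by (simp add: q_tens_assoc)

lemma xq_split_r: "1 \<le> j \<Longrightarrow> j \<le> b \<Longrightarrow> xq (a + b) (a + j) = qId a \<otimes> (xq b j :: 'k::field mor)"
proof -
  assume "1 \<le> j" "j \<le> b"
  then have e: "a + j - 1 = a + (j - 1)" "a + b - (a + j) = b - j" by auto
  show ?thesis unfolding xq_def e by (simp add: q_tens_assoc[symmetric])
qed

lemma ppq_split1: "k \<le> a \<Longrightarrow> ppq r (a + b) k = ppq r a k \<otimes> (qId b :: 'k::field mor)"
proof (induction k)
  case 0 then show ?case by simp
next
  case (Suc k)
  have x: "qwt (xq a (Suc k) :: 'k mor) \<and> qsrc (xq a (Suc k) :: 'k mor) = a \<and> qtgt (xq a (Suc k) :: 'k mor) = a"
    using xq_wt[of "Suc k" a, where 'k='k] Suc.prems by auto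
  have "ppq r (a + b) (Suc k) = ppq r a k \<otimes> qId b + (qpow (a + b) (xq a (Suc k) \<otimes> qId b) r :: 'k mor)"
    using Suc xq_split_l[of "Suc k" a b, where 'k='k] by simp
  also have "\<dots> = (ppq r a k + qpow a (xq a (Suc k)) r) \<otimes> (qId b :: 'k mor)"
    using x by (simp add: pow_tens_r q_tens_add_l)
  finally show ?case by simp
qed

lemma ppq_split2: "j \<le> b \<Longrightarrow> ppq r (a + b) (a + j) = Ps r a \<otimes> qId b + qId a \<otimes> (ppq r b j :: 'k::field mor)"
proof (induction j)
  case 0
  have "ppq r (a + b) a = Ps r a \<otimes> (qId b :: 'k mor)" using ppq_split1[of a a r b, where 'k='k] by (simp add: Ps_def)
  then show ?case by simp
next
  case (Suc j)
  have x: "qwt (xq b (Suc j) :: 'k mor) \<and> qsrc (xq b (Suc j) :: 'k mor) = b \<and> qtgt (xq b (Suc j) :: 'k mor) = b"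
    using xq_wt[of "Suc j" b, where 'k='k] Suc.prems by auto
  have "ppq r (a + b) (a + Suc j) = ppq r (a + b) (a + j) + (qpow (a + b) (xq (a + b) (a + Suc j)) r :: 'k mor)"
    by simp
  also have "\<dots> = (Ps r a \<otimes> qId b + qId a \<otimes> ppq r b j) + qpow (a + b) (qId a \<otimes> xq b (Suc j)) r"
    using Suc xq_split_r[of "Suc j" b a, where 'k='k] by simp
  also have "\<dots> = Ps r a \<otimes> qId b + qId a \<otimes> (ppq r b (Suc j) :: 'k mor)"
    using x by (simp add: pow_tens_l q_tens_add_r q_add_assoc)
  finally show ?case .
qed

lemma Ps_add: "Ps r (a + b) = Ps r a \<otimes> qId b + qId a \<otimes> (Ps r b :: 'k::field mor)"
  using ppq_split2[of b b r a, where 'k='k] by (simp add: Ps_def)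


lemma pow_comm2: "qwt F \<Longrightarrow> qsrc F = n \<Longrightarrow> qtgt F = n \<Longrightarrow> qwt G \<Longrightarrow> qsrc G = n \<Longrightarrow> qtgt G = n \<Longrightarrow>
  F * G = G * F \<Longrightarrow> qpow n F k * G = G * (qpow n F k :: 'k::field mor)"
proof (induction k)
  case 0 then show ?case by simp
next
  case (Suc k)
  have "qpow n F (Suc k) * G = F * (qpow n F k * G)" by (simp add: q_mult_assoc)
  also have "\<dots> = (F * G) * qpow n F k" using Suc.IH Suc.prems by (metis q_mult_assoc)
  also have "\<dots> = (G * F) * qpow n F k" using Suc.prems by simp
  also have "\<dots> = G * qpow n F (Suc k)" by (simp add: q_mult_assoc)
  finally show ?case .
qed

lemma pow_comm: "qwt F \<Longrightarrow> qsrc F = n \<Longrightarrow> qtgt F = n \<Longrightarrow> qpow n F k * F = F * (qpow n F k :: 'k::field mor)"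
  using pow_comm2[of F n F k] by simp

lemma Ps0: "Ps r 0 = (qZr 0 0 :: 'k::field mor)"
  by (simp add: Ps_def)

lemma Ps1: "Ps r 1 = (qpow 1 qX r :: 'k::field mor)"
proof -
  have w: "qwt (qpow 1 qX r :: 'k mor) \<and> qsrc (qpow 1 qX r :: 'k mor) = 1 \<and> qtgt (qpow 1 qX r :: 'k mor) = 1"
    by (rule qpow_wt) auto
  have "xq 1 1 = (qX :: 'k mor)" by (simp add: xq_def)
  then show ?thesis using w by (simp add: Ps_def One_nat_def)
qed

lemma Ps2: "Ps r 2 = qpow 2 X1 r + (qpow 2 X2 r :: 'k::field mor)"
proof -
  have w: "qwt (qpow 2 X1 r :: 'k mor) \<and> qsrc (qpow 2 X1 r :: 'k mor) = 2 \<and> qtgt (qpow 2 X1 r :: 'k mor) = 2"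
    by (rule qpow_wt) auto
  have e: "Ps r 2 = (qZr 2 2 + qpow 2 (xq 2 1) r) + (qpow 2 (xq 2 2) r :: 'k mor)"
    by (simp add: Ps_def numeral_2_eq_2 One_nat_def)
  have "xq 2 1 = (X1 :: 'k mor)" "xq 2 2 = (X2 :: 'k mor)" by (simp_all add: xq_def One_nat_def)
  then show ?thesis using w e by simp
qed

lemma cap_pow: "qCap * qpow 2 X2 k = smul ((-1) ^ k) (qCap * (qpow 2 X1 k :: 'k::field mor))"
proof (induction k)
  case 0 then show ?case by (simp add: q_smul_one)
next
  case (Suc k)
  have w1: "qwt (qpow 2 X1 k :: 'k mor) \<and> qsrc (qpow 2 X1 k :: 'k mor) = 2 \<and> qtgt (qpow 2 X1 k :: 'k mor) = 2"
    by (rule qpow_wt) auto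
  have w2: "qwt (qpow 2 X2 k :: 'k mor) \<and> qsrc (qpow 2 X2 k :: 'k mor) = 2 \<and> qtgt (qpow 2 X2 k :: 'k mor) = 2"
    by (rule qpow_wt) auto
  have c: "qpow 2 X2 k * X1 = X1 * (qpow 2 X2 k :: 'k mor)"
    by (rule pow_comm2) (auto simp: X12_comm)
  have "qCap * qpow 2 X2 (Suc k) = (qCap * X2) * (qpow 2 X2 k :: 'k mor)" by (simp add: q_mult_assoc)
  also have "\<dots> = smul (-1) (qCap * (X1 * qpow 2 X2 k))" by (simp add: q_rel_cap_dot q_comp_smul_l q_mult_assoc)
  also have "\<dots> = smul (-1) ((qCap * qpow 2 X2 k) * X1)" by (simp add: c q_mult_assoc)
  also have "\<dots> = smul ((-1) ^ Suc k) (qCap * (qpow 2 X1 k * X1))"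
    by (simp add: Suc q_comp_smul_l q_smul_smul q_mult_assoc)
  also have "qpow 2 X1 k * X1 = X1 * (qpow 2 X1 k :: 'k mor)" by (rule pow_comm) auto
  finally show ?case by simp
qed

lemma cup_pow: "qpow 2 X1 k * qCup = smul ((-1) ^ k) (qpow 2 X2 k * (qCup :: 'k::field mor))"
proof (induction k)
  case 0 then show ?case by (simp add: q_smul_one)
next
  case (Suc k)
  have c: "qpow 2 X2 k * X1 = X1 * (qpow 2 X2 k :: 'k mor)"
    by (rule pow_comm2) (auto simp: X12_comm)
  have "qpow 2 X1 (Suc k) * qCup = X1 * (qpow 2 X1 k * (qCup :: 'k mor))" by (simp add: q_mult_assoc)
  also have "\<dots> = smul ((-1) ^ k) (X1 * (qpow 2 X2 k * qCup))"
    by (simp add: Suc q_comp_smul_r)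
  also have "\<dots> = smul ((-1) ^ k) (qpow 2 X2 k * (X1 * (qCup :: 'k mor)))"
    by (simp add: q_mult_assoc[symmetric] c)
  also have "\<dots> = smul ((-1) ^ Suc k) ((qpow 2 X2 k * X2) * qCup)"
    by (simp add: cupdot q_comp_smul_r q_smul_smul q_mult_assoc)
  also have "qpow 2 X2 k * X2 = X2 * (qpow 2 X2 k :: 'k mor)" by (rule pow_comm) auto
  finally show ?case by (simp add: q_mult_assoc)
qed


lemma hom_q: "hom f n m \<Longrightarrow> qwt (abs_mor f :: 'k::field mor) \<and> qsrc (abs_mor f :: 'k mor) = n \<and> qtgt (abs_mor f :: 'k mor) = m"
  by (simp add: qwt.abs_eq qsrc.abs_eq qtgt.abs_eq hom_iff)

lemma central:
  assumes odd: "odd r"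
  shows "hom f n m \<Longrightarrow> Ps r m * abs_mor f = abs_mor f * (Ps r n :: 'k::field mor)"
proof (induction rule: hom.induct)
  case (hom_Id n)
  then show ?case by (simp add: qId.abs_eq[symmetric])
next
  case (hom_Zr n m)
  then show ?case by (simp add: qZr.abs_eq[symmetric])
next
  case hom_X
  have "qpow 1 qX r * qX = qX * (qpow 1 qX r :: 'k mor)" by (rule pow_comm) auto
  then show ?case by (simp add: qX.abs_eq[symmetric] Ps1)
next
  case hom_Tau
  show ?case using odd by (simp add: qT.abs_eq[symmetric] Ps2 tau_central)
next
  case hom_Cap
  have w: "qwt (qpow 2 X1 r :: 'k mor) \<and> qsrc (qpow 2 X1 r :: 'k mor) = 2 \<and> qtgt (qpow 2 X1 r :: 'k mor) = 2"
    by (rule qpow_wt) auto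
  have "qCap * Ps r 2 = qCap * qpow 2 X1 r + smul (-1) (qCap * (qpow 2 X1 r :: 'k mor))"
    using odd by (simp add: Ps2 q_distrib_left cap_pow)
  also have "\<dots> = qZr 2 0" using w by (simp add: q_add_inv)
  finally show ?case by (simp add: qCap.abs_eq[symmetric] Ps0)
next
  case hom_Cup
  have w: "qwt (qpow 2 X2 r :: 'k mor) \<and> qsrc (qpow 2 X2 r :: 'k mor) = 2 \<and> qtgt (qpow 2 X2 r :: 'k mor) = 2"
    by (rule qpow_wt) auto
  have "Ps r 2 * qCup = qpow 2 X2 r * qCup + smul (-1) (qpow 2 X2 r * (qCup :: 'k mor))"
    using odd by (simp add: Ps2 q_distrib_right cup_pow q_add_comm)
  also have "\<dots> = qZr 0 2" using w by (simp add: q_add_inv)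
  finally show ?case by (simp add: qCup.abs_eq[symmetric] Ps0)
next
  case (hom_Comp f n m g k)
  have "Ps r m * abs_mor (Comp f g) = (Ps r m * abs_mor f) * (abs_mor g :: 'k mor)"
    by (simp add: times_mor.abs_eq[symmetric] q_mult_assoc)
  also have "\<dots> = abs_mor f * (Ps r n * abs_mor g)" using hom_Comp by (simp add: q_mult_assoc)
  also have "\<dots> = abs_mor (Comp f g) * (Ps r k :: 'k mor)"
    using hom_Comp by (simp add: times_mor.abs_eq[symmetric] q_mult_assoc)
  finally show ?case .
next
  case (hom_Tens f n m g n' m')
  let ?F = "abs_mor f :: 'k mor" and ?G = "abs_mor g :: 'k mor"
  have wf: "qwt ?F" "qsrc ?F = n" "qtgt ?F = m" using hom_q[OF hom_Tens.hyps(1)] by auto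
  have wg: "qwt ?G" "qsrc ?G = n'" "qtgt ?G = m'" using hom_q[OF hom_Tens.hyps(2)] by auto
  have "Ps r (m + m') * abs_mor (Tens f g) = (Ps r m \<otimes> qId m' + qId m \<otimes> Ps r m') * (?F \<otimes> ?G)"
    by (simp add: Ps_add tens.abs_eq[symmetric])
  also have "\<dots> = (Ps r m * ?F) \<otimes> ?G + ?F \<otimes> (Ps r m' * ?G)"
    using wf wg by (simp add: q_distrib_right q_interchange)
  also have "\<dots> = (?F * Ps r n) \<otimes> ?G + ?F \<otimes> (?G * Ps r n')"
    using hom_Tens by simp
  also have "\<dots> = (?F \<otimes> ?G) * (Ps r n \<otimes> qId n' + qId n \<otimes> Ps r n')"
    using wf wg by (simp add: q_distrib_left q_interchange)
  also have "\<dots> = abs_mor (Tens f g) * Ps r (n + n')"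
    by (simp add: Ps_add tens.abs_eq[symmetric])
  finally show ?case .
next
  case (hom_Add f n m g)
  then show ?case by (simp add: plus_mor.abs_eq[symmetric] q_distrib_left q_distrib_right)
next
  case (hom_Smul f n m c)
  then show ?case by (simp add: smul.abs_eq[symmetric] q_comp_smul_l q_comp_smul_r)
qed

theorem corollary3p9:
  fixes t :: "'k::field" and r :: nat
  assumes "(2::'k) \<noteq> 0"
    and "t = 0 \<or> t = 1"
    and "odd r"
  shows "in_center t (\<lambda>n. (psum r n :: 'k nbmor))"
  unfolding in_center_def
proof (intro conjI allI impI)
  fix n
  have "qwt (Ps r n :: 'k mor)" "qsrc (Ps r n :: 'k mor) = n" "qtgt (Ps r n :: 'k mor) = n" by simp_all
  then show "hom (psum r n :: 'k nbmor) n n"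
    unfolding abs_psum[symmetric] by (simp add: qwt.abs_eq qsrc.abs_eq qtgt.abs_eq hom_iff)
next
  fix f :: "'k nbmor" and n m
  assume h: "hom f n m"
  have "abs_mor (Comp (psum r m) f) = abs_mor (Comp f (psum r n))"
    using central[OF assms(3) h] by (simp add: times_mor.abs_eq[symmetric] abs_psum)
  then have "R (Comp (psum r m) f) (Comp f (psum r n))" by (simp add: mor.abs_eq_iff)
  moreover have "wt (Comp (psum r m) f)"
  proof -
    have "qwt (Ps r m * abs_mor f :: 'k mor)" using hom_q[OF h] by simp
    then show ?thesis by (simp add: abs_psum[symmetric] times_mor.abs_eq qwt.abs_eq)
  qed
  ultimately show "eqv t (Comp (psum r m) f) (Comp f (psum r n))" by (rule R_E)
qed


end
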